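(* Every ado-semilattice $(S,\sqcup,\cap)$ is a $\curlyvee$-algebra when one defines $a\curlyvee b=(a\sqcup b)\cap(b\sqcup a)$. Consequently, every functional algebra of signature $(\curlyvee)$ is a $\curlyvee$-algebra.
   Context: An o-semilattice is an algebra $(L,\cap,\sqcup)$ such that $(L,\cap)$ is a semilattice and, with $x\leq y$ iff $x=x\cap y$, for all $x,y,z$: (i) $x\leq x\sqcup y$; (ii) $(x\cap y)\sqcup(y\cap z)\leq y$; (iii) $x\sqcup y\leq x\sqcup(y\cap(x\sqcup y))$; (iv) $x\cap z\leq(x\cap y)\sqcup z$. It is distributive if $(a\cap d)\sqcup((b\cap d)\cap(c\cap d))=((a\cap d)\sqcup(b\cap d))\cap((a\cap d)\sqcup(c\cap d))$ for all $a,b,c,d$. An ado-semilattice is a distributive o-semilattice in which $\sqcup$ is associative. A left regular band is a set with a binary operation $\sqcup$ satisfying $a\sqcup(b\sqcup c)=(a\sqcup b)\sqcup c$, $a\sqcup a=a$, $a\sqcup b=(a\sqcup b)\sqcup a$; write $a\lesssim b$ iff $b\sqcup a=b$. A $\curlyvee$-algebra is an algebra $(S,\curlyvee)$ such that, defining $a\sqcup b=a\curlyvee(a\curlyvee b)$: $(S,\sqcup)$ is a left regular band; $\curlyvee$ is commutative and idempotent; $(a\curlyvee b)\sqcup(a\sqcup b)=a\sqcup b$; $a\sqcup(b\curlyvee c)=(a\sqcup b)\curlyvee(a\sqcup c)$; and if $d\lesssim a,b,c,a\curlyvee b,b\curlyvee c$ then $d\lesssim a\curlyvee c$. For sets $X,Y$,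 $\mathrm{Par}(X,Y)$ is the set of partial functions $X\to Y$ as sets of pairs; for $f,g$, $g-f$ is the restriction of $g$ to $X\setminus\mathrm{dom}(f)$ and restricted union is $f\curlyvee g=(f-g)\cup(f\cap g)\cup(g-f)$. A functional algebra of signature $(\curlyvee)$ is one isomorphic to $(A,\curlyvee)$ with $A\subseteq\mathrm{Par}(X,Y)$ closed under restricted union. *)

theory Defs
  imports Main
begin

definition meet_semilattice :: "'a set \<Rightarrow> ('a \<Rightarrow> 'a \<Rightarrow> 'a) \<Rightarrow> bool" where
  "meet_semilattice S m \<longleftrightarrow>
     (\<forall>x\<in>S. \<forall>y\<in>S. m x y \<in> S) \<and>
     (\<forall>x\<in>S. \<forall>y\<in>S. \<forall>z\<in>S. m (m x y) z = m x (m y z)) \<and>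
     (\<forall>x\<in>S. \<forall>y\<in>S. m x y = m y x) \<and>
     (\<forall>x\<in>S. m x x = x)"

definition sl_le :: "('a \<Rightarrow> 'a \<Rightarrow> 'a) \<Rightarrow> 'a \<Rightarrow> 'a \<Rightarrow> bool" where
  "sl_le m x y \<longleftrightarrow> x = m x y"

definition o_semilattice :: "'a set \<Rightarrow> ('a \<Rightarrow> 'a \<Rightarrow> 'a) \<Rightarrow> ('a \<Rightarrow> 'a \<Rightarrow> 'a) \<Rightarrow> bool" where
  "o_semilattice S m j \<longleftrightarrow>
     meet_semilattice S m \<and>
     (\<forall>x\<in>S. \<forall>y\<in>S. j x y \<in> S) \<and>
     (\<forall>x\<in>S. \<forall>y\<in>S. sl_le m x (j x y)) \<and>
     (\<forall>x\<in>S. \<forall>y\<in>S. \<forall>z\<in>S. sl_le m (j (m x y) (m y z)) y) \<and>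
     (\<forall>x\<in>S. \<forall>y\<in>S. sl_le m (j x y) (j x (m y (j x y)))) \<and>
     (\<forall>x\<in>S. \<forall>y\<in>S. \<forall>z\<in>S. sl_le m (m x z) (j (m x y) z))"

definition distributive_os :: "'a set \<Rightarrow> ('a \<Rightarrow> 'a \<Rightarrow> 'a) \<Rightarrow> ('a \<Rightarrow> 'a \<Rightarrow> 'a) \<Rightarrow> bool" where
  "distributive_os S m j \<longleftrightarrow>
     (\<forall>a\<in>S. \<forall>b\<in>S. \<forall>c\<in>S. \<forall>d\<in>S.
        j (m a d) (m (m b d) (m c d)) = m (j (m a d) (m b d)) (j (m a d) (m c d)))"

definition ado_semilattice :: "'a set \<Rightarrow> ('a \<Rightarrow> 'a \<Rightarrow> 'a) \<Rightarrow> ('a \<Rightarrow> 'a \<Rightarrow> 'a) \<Rightarrow> bool" where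
  "ado_semilattice S m j \<longleftrightarrow>
     o_semilattice S m j \<and> distributive_os S m j \<and>
     (\<forall>a\<in>S. \<forall>b\<in>S. \<forall>c\<in>S. j a (j b c) = j (j a b) c)"

definition left_regular_band :: "'a set \<Rightarrow> ('a \<Rightarrow> 'a \<Rightarrow> 'a) \<Rightarrow> bool" where
  "left_regular_band S j \<longleftrightarrow>
     (\<forall>a\<in>S. \<forall>b\<in>S. j a b \<in> S) \<and>
     (\<forall>a\<in>S. \<forall>b\<in>S. \<forall>c\<in>S. j a (j b c) = j (j a b) c) \<and>
     (\<forall>a\<in>S. j a a = a) \<and>
     (\<forall>a\<in>S. \<forall>b\<in>S. j a b = j (j a b) a)"

definition lrb_le :: "('a \<Rightarrow> 'a \<Rightarrow> 'a) \<Rightarrow> 'a \<Rightarrow> 'a \<Rightarrow> bool" where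
  "lrb_le j a b \<longleftrightarrow> j b a = b"

definition vee_join :: "('a \<Rightarrow> 'a \<Rightarrow> 'a) \<Rightarrow> 'a \<Rightarrow> 'a \<Rightarrow> 'a" where
  "vee_join v a b = v a (v a b)"

definition vee_algebra :: "'a set \<Rightarrow> ('a \<Rightarrow> 'a \<Rightarrow> 'a) \<Rightarrow> bool" where
  "vee_algebra S v \<longleftrightarrow>
     (\<forall>a\<in>S. \<forall>b\<in>S. v a b \<in> S) \<and>
     left_regular_band S (vee_join v) \<and>
     (\<forall>a\<in>S. \<forall>b\<in>S. v a b = v b a) \<and>
     (\<forall>a\<in>S. v a a = a) \<and>
     (\<forall>a\<in>S. \<forall>b\<in>S. vee_join v (v a b) (vee_join v a b) = vee_join v a b) \<and>
     (\<forall>a\<in>S. \<forall>b\<in>S. \<forall>c\<in>S.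
        vee_join v a (v b c) = v (vee_join v a b) (vee_join v a c)) \<and>
     (\<forall>a\<in>S. \<forall>b\<in>S. \<forall>c\<in>S. \<forall>d\<in>S.
        lrb_le (vee_join v) d a \<and> lrb_le (vee_join v) d b \<and> lrb_le (vee_join v) d c \<and>
        lrb_le (vee_join v) d (v a b) \<and> lrb_le (vee_join v) d (v b c)
        \<longrightarrow> lrb_le (vee_join v) d (v a c))"

definition Par :: "'x set \<Rightarrow> 'y set \<Rightarrow> ('x \<times> 'y) set set" where
  "Par X Y = {f. f \<subseteq> X \<times> Y \<and> single_valued f}"

definition rdiff :: "('x \<times> 'y) set \<Rightarrow> ('x \<times> 'y) set \<Rightarrow> ('x \<times> 'y) set" where
  "rdiff g f = {p \<in> g. fst p \<notin> Domain f}"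

definition runion :: "('x \<times> 'y) set \<Rightarrow> ('x \<times> 'y) set \<Rightarrow> ('x \<times> 'y) set" where
  "runion f g = rdiff f g \<union> (f \<inter> g) \<union> rdiff g f"

definition functional_vee_algebra :: "'a set \<Rightarrow> ('a \<Rightarrow> 'a \<Rightarrow> 'a) \<Rightarrow> 'x set \<Rightarrow> 'y set
    \<Rightarrow> ('x \<times> 'y) set set \<Rightarrow> ('a \<Rightarrow> ('x \<times> 'y) set) \<Rightarrow> bool" where
  "functional_vee_algebra S v X Y A h \<longleftrightarrow>
     (\<forall>a\<in>S. \<forall>b\<in>S. v a b \<in> S) \<and>
     A \<subseteq> Par X Y \<and> (\<forall>f\<in>A. \<forall>g\<in>A. runion f g \<in> A) \<and>
     bij_betw h S A \<and> (\<forall>a\<in>S. \<forall>b\<in>S. h (v a b) = runion (h a) (h b))"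

end

theory Submission
  imports Defs
begin

locale ado =
  fixes S :: "'a set" and m :: "'a \<Rightarrow> 'a \<Rightarrow> 'a" (infixl "\<otimes>" 70)
    and j :: "'a \<Rightarrow> 'a \<Rightarrow> 'a" (infixl "\<oplus>" 65)
  assumes ado: "ado_semilattice S m j"
begin

definition le (infix "\<preceq>" 50) where "x \<preceq> y \<longleftrightarrow> x \<otimes> y = x"

lemma mc[simp]: "x \<in> S \<Longrightarrow> y \<in> S \<Longrightarrow> x \<otimes> y \<in> S"
  using ado unfolding ado_semilattice_def o_semilattice_def meet_semilattice_def by auto
lemma jc[simp]: "x \<in> S \<Longrightarrow> y \<in> S \<Longrightarrow> x \<oplus> y \<in> S"
  using ado unfolding ado_semilattice_def o_semilattice_def meet_semilattice_def by auto
lemma ma: "x \<in> S \<Longrightarrow> y \<in> S \<Longrightarrow> z \<in> S \<Longrightarrow> x \<otimes> y \<otimes> z = x \<otimes> (y \<otimes> z)"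
  using ado unfolding ado_semilattice_def o_semilattice_def meet_semilattice_def by auto
lemma mcomm: "x \<in> S \<Longrightarrow> y \<in> S \<Longrightarrow> x \<otimes> y = y \<otimes> x"
  using ado unfolding ado_semilattice_def o_semilattice_def meet_semilattice_def by auto
lemma mi[simp]: "x \<in> S \<Longrightarrow> x \<otimes> x = x"
  using ado unfolding ado_semilattice_def o_semilattice_def meet_semilattice_def by auto
lemma ax1: "x \<in> S \<Longrightarrow> y \<in> S \<Longrightarrow> x \<preceq> x \<oplus> y"
  using ado unfolding ado_semilattice_def o_semilattice_def sl_le_def le_def by metis
lemma ax2: "x \<in> S \<Longrightarrow> y \<in> S \<Longrightarrow> z \<in> S \<Longrightarrow> (x \<otimes> y) \<oplus> (y \<otimes> z) \<preceq> y"
  using ado unfolding ado_semilattice_def o_semilattice_def sl_le_def le_def by metis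
lemma ax3: "x \<in> S \<Longrightarrow> y \<in> S \<Longrightarrow> x \<oplus> y \<preceq> x \<oplus> (y \<otimes> (x \<oplus> y))"
  using ado unfolding ado_semilattice_def o_semilattice_def sl_le_def le_def by metis
lemma ax4: "x \<in> S \<Longrightarrow> y \<in> S \<Longrightarrow> z \<in> S \<Longrightarrow> x \<otimes> z \<preceq> (x \<otimes> y) \<oplus> z"
  using ado unfolding ado_semilattice_def o_semilattice_def sl_le_def le_def by metis
lemma dist: "a \<in> S \<Longrightarrow> b \<in> S \<Longrightarrow> c \<in> S \<Longrightarrow> d \<in> S \<Longrightarrow>
   (a \<otimes> d) \<oplus> ((b \<otimes> d) \<otimes> (c \<otimes> d)) = ((a \<otimes> d) \<oplus> (b \<otimes> d)) \<otimes> ((a \<otimes> d) \<oplus> (c \<otimes> d))"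
  using ado unfolding ado_semilattice_def distributive_os_def by blast
lemma ja: "x \<in> S \<Longrightarrow> y \<in> S \<Longrightarrow> z \<in> S \<Longrightarrow> x \<oplus> (y \<oplus> z) = x \<oplus> y \<oplus> z"
  using ado unfolding ado_semilattice_def by blast


lemma mlc: "x \<in> S \<Longrightarrow> y \<in> S \<Longrightarrow> z \<in> S \<Longrightarrow> x \<otimes> (y \<otimes> z) = y \<otimes> (x \<otimes> z)"
  by (metis ma mcomm)
lemma mabs[simp]: "x \<in> S \<Longrightarrow> y \<in> S \<Longrightarrow> x \<otimes> (x \<otimes> y) = x \<otimes> y"
  by (metis ma mi)
lemma mabs2[simp]: "x \<in> S \<Longrightarrow> y \<in> S \<Longrightarrow> x \<otimes> y \<otimes> y = x \<otimes> y"
  by (metis ma mi)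
lemma le_refl[simp]: "x \<in> S \<Longrightarrow> x \<preceq> x" by (simp add: le_def)
lemma le_trans: "x \<in> S \<Longrightarrow> y \<in> S \<Longrightarrow> z \<in> S \<Longrightarrow> x \<preceq> y \<Longrightarrow> y \<preceq> z \<Longrightarrow> x \<preceq> z"
  unfolding le_def by (metis ma)
lemma le_anti: "x \<in> S \<Longrightarrow> y \<in> S \<Longrightarrow> x \<preceq> y \<Longrightarrow> y \<preceq> x \<Longrightarrow> x = y"
  unfolding le_def by (metis mcomm)
lemma le_m1[simp]: "x \<in> S \<Longrightarrow> y \<in> S \<Longrightarrow> x \<otimes> y \<preceq> x"
  unfolding le_def by (metis ma mcomm mi)
lemma le_m2[simp]: "x \<in> S \<Longrightarrow> y \<in> S \<Longrightarrow> x \<otimes> y \<preceq> y"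
  unfolding le_def by (metis ma mi)
lemma le_glb: "x \<in> S \<Longrightarrow> y \<in> S \<Longrightarrow> z \<in> S \<Longrightarrow> x \<preceq> y \<Longrightarrow> x \<preceq> z \<Longrightarrow> x \<preceq> y \<otimes> z"
  unfolding le_def by (metis ma)
lemma le_glb_iff: "x \<in> S \<Longrightarrow> y \<in> S \<Longrightarrow> z \<in> S \<Longrightarrow> x \<preceq> y \<otimes> z \<longleftrightarrow> x \<preceq> y \<and> x \<preceq> z"
  by (meson le_glb le_trans le_m1 le_m2 mc)
lemma le_meet_eq: "x \<in> S \<Longrightarrow> y \<in> S \<Longrightarrow> x \<preceq> y \<Longrightarrow> x \<otimes> y = x"
  unfolding le_def by simp
lemma le_meet_eq2: "x \<in> S \<Longrightarrow> y \<in> S \<Longrightarrow> x \<preceq> y \<Longrightarrow> y \<otimes> x = x"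
  unfolding le_def by (metis mcomm)

lemma ji[simp]: "x \<in> S \<Longrightarrow> x \<oplus> x = x"
  by (metis ax1 ax2 mi le_anti jc)
lemma jub: "x \<in> S \<Longrightarrow> y \<in> S \<Longrightarrow> z \<in> S \<Longrightarrow> x \<preceq> z \<Longrightarrow> y \<preceq> z \<Longrightarrow> x \<oplus> y \<preceq> z"
  using ax2[of x z y] by (metis le_meet_eq le_meet_eq2)
lemma jle1: "x \<in> S \<Longrightarrow> y \<in> S \<Longrightarrow> x \<preceq> y \<Longrightarrow> y \<oplus> x = y"
  by (metis ax1 jub le_refl le_anti jc)
lemma jle2: "x \<in> S \<Longrightarrow> y \<in> S \<Longrightarrow> x \<preceq> y \<Longrightarrow> x \<oplus> y = y"
proof -
  assume a: "x \<in> S" "y \<in> S" "x \<preceq> y"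
  have "x \<oplus> y \<preceq> y" using jub[of x y y] a by simp
  moreover have "y \<preceq> x \<oplus> y" using ax4[of y x y] a by (metis mi le_meet_eq2)
  ultimately show ?thesis using a by (metis le_anti jc)
qed
lemma lrb3: "x \<in> S \<Longrightarrow> y \<in> S \<Longrightarrow> x \<oplus> y \<oplus> x = x \<oplus> y"
  by (metis ax1 jle1 jc)
lemma ax4': "x \<in> S \<Longrightarrow> y \<in> S \<Longrightarrow> z \<in> S \<Longrightarrow> y \<preceq> x \<Longrightarrow> x \<otimes> z \<preceq> y \<oplus> z"
  by (metis ax4 le_meet_eq2)
lemma distle: "a \<in> S \<Longrightarrow> b \<in> S \<Longrightarrow> c \<in> S \<Longrightarrow> d \<in> S \<Longrightarrow> a \<preceq> d \<Longrightarrow> b \<preceq> d \<Longrightarrow> c \<preceq> d \<Longrightarrow>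
   a \<oplus> (b \<otimes> c) = (a \<oplus> b) \<otimes> (a \<oplus> c)"
  using dist[of a b c d] by (simp add: le_meet_eq)

lemma M1: assumes "x \<in> S" "y \<in> S" "z \<in> S" "y \<preceq> z" shows "x \<oplus> y \<preceq> x \<oplus> z"
proof -
  define u where "u = y \<otimes> (x \<oplus> y)"
  define v where "v = (x \<oplus> y) \<otimes> z"
  have S: "u \<in> S" "v \<in> S" using assms u_def v_def by auto
  have 1: "x \<oplus> y \<preceq> x \<oplus> u" using ax3 assms u_def by blast
  have uv: "u \<preceq> v" using assms unfolding u_def v_def
    by (meson jc le_glb le_m1 le_m2 le_trans mc)
  have ud: "u \<preceq> x \<oplus> y" "v \<preceq> x \<oplus> y" "x \<preceq> x \<oplus> y" using assms u_def v_def le_m1 le_m2 ax1 by auto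
  have "x \<oplus> (u \<otimes> v) = (x \<oplus> u) \<otimes> (x \<oplus> v)" using distle[of x u v "x \<oplus> y"] ud S assms by simp
  hence 2: "x \<oplus> u \<preceq> x \<oplus> v" using uv S assms by (simp add: le_meet_eq le_def)
  have "v \<preceq> x \<oplus> z" using ax4'[of "x \<oplus> y" x z] assms ax1 v_def by simp
  hence 3: "x \<oplus> v \<preceq> x \<oplus> z" using jub[of x v "x \<oplus> z"] assms S ax1 by simp
  show ?thesis using 1 2 3 le_trans assms S by (meson jc)
qed

lemma jeq_lemma: assumes "a \<in> S" "p \<in> S" shows "a \<oplus> (p \<otimes> (a \<oplus> p)) = a \<oplus> p"
proof -
  have "a \<oplus> p \<preceq> a \<oplus> (p \<otimes> (a \<oplus> p))" using ax3 assms by blast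
  moreover have "a \<oplus> (p \<otimes> (a \<oplus> p)) \<preceq> a \<oplus> p" using M1[of a "p \<otimes> (a \<oplus> p)" p] assms by simp
  ultimately show ?thesis using assms by (meson le_anti jc mc)
qed

lemma G: assumes "a \<in> S" "p \<in> S" "w \<in> S" "a \<preceq> w" "w \<preceq> a \<oplus> p"
  shows "a \<oplus> (p \<otimes> w) = w"
proof -
  define e where "e = a \<oplus> p"
  define r where "r = p \<otimes> e"
  have S: "e \<in> S" "r \<in> S" using assms e_def r_def by auto
  have ar: "a \<oplus> r = e" using jeq_lemma assms e_def r_def by simp
  have b: "a \<preceq> e" "r \<preceq> e" "w \<preceq> e" using assms e_def r_def ax1 by auto
  have "a \<oplus> (r \<otimes> w) = (a \<oplus> r) \<otimes> (a \<oplus> w)" using distle[of a r w e] b S assms by simp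
  also have "\<dots> = e \<otimes> w" using ar jle2[of a w] assms by simp
  also have "\<dots> = w" using b(3) le_meet_eq2 assms S by simp
  finally have 1: "a \<oplus> (r \<otimes> w) = w" .
  have "r \<otimes> w = p \<otimes> w" unfolding r_def using b(3) S assms by (metis ma le_meet_eq2)
  thus ?thesis using 1 by simp
qed

lemma LD: assumes "a \<in> S" "p \<in> S" "q \<in> S" shows "a \<oplus> (p \<otimes> q) = (a \<oplus> p) \<otimes> (a \<oplus> q)"
proof -
  define w where "w = (a \<oplus> p) \<otimes> (a \<oplus> q)"
  have wS: "w \<in> S" using w_def assms by simp
  have 1: "a \<oplus> (p \<otimes> q) \<preceq> w" unfolding w_def using assms
    by (meson M1 le_glb le_m1 le_m2 jc mc)
  have aw: "a \<preceq> w" unfolding w_def using assms ax1 le_glb by simp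
  have wp: "w \<preceq> a \<oplus> p" "w \<preceq> a \<oplus> q" unfolding w_def using assms by auto
  have gp: "a \<oplus> (p \<otimes> w) = w" using G[of a p w] assms wS aw wp by simp
  have gq: "a \<oplus> (q \<otimes> w) = w" using G[of a q w] assms wS aw wp by simp
  have "a \<oplus> ((p \<otimes> w) \<otimes> (q \<otimes> w)) = (a \<oplus> (p \<otimes> w)) \<otimes> (a \<oplus> (q \<otimes> w))"
    using distle[of a "p \<otimes> w" "q \<otimes> w" w] assms wS aw by simp
  hence 2: "a \<oplus> ((p \<otimes> w) \<otimes> (q \<otimes> w)) = w" using gp gq wS by simp
  have "(p \<otimes> w) \<otimes> (q \<otimes> w) \<preceq> p \<otimes> q" using assms wS
    by (meson le_glb le_m1 le_m2 le_trans mc)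
  hence "w \<preceq> a \<oplus> (p \<otimes> q)" using M1[of a "(p \<otimes> w) \<otimes> (q \<otimes> w)" "p \<otimes> q"] 2 assms wS by simp
  thus ?thesis using 1 le_anti assms wS w_def by (meson jc mc)
qed

lemma comp: assumes "x \<in> S" "y \<in> S" "z \<in> S" "x \<preceq> z" "y \<preceq> z" shows "x \<oplus> y = y \<oplus> x"
proof -
  have "\<And>x y. x \<in> S \<Longrightarrow> y \<in> S \<Longrightarrow> x \<preceq> z \<Longrightarrow> y \<preceq> z \<Longrightarrow> x \<oplus> y \<preceq> y \<oplus> x"
  proof -
    fix x y assume a: "x \<in> S" "y \<in> S" "x \<preceq> z" "y \<preceq> z"
    have "z \<otimes> x \<preceq> y \<oplus> x" using ax4'[of z y x] a assms by simp
    hence "x \<preceq> y \<oplus> x" using a assms le_meet_eq2 by metis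
    thus "x \<oplus> y \<preceq> y \<oplus> x" using jub ax1 a by simp
  qed
  thus ?thesis using assms le_anti by (meson jc)
qed

lemma jle2': "x \<in> S \<Longrightarrow> y \<in> S \<Longrightarrow> y \<preceq> x \<Longrightarrow> y \<oplus> x = x" using jle2 by blast

lemma K4half: assumes S: "p \<in> S" "q \<in> S" "w \<in> S" "d \<in> S"
  and pw: "p \<preceq> w" and qw: "q \<preceq> w" and pd: "p \<oplus> d = p" and qd: "q \<oplus> d = q"
  shows "(p \<otimes> q) \<oplus> d \<preceq> p"
proof -
  define P where "P = d \<oplus> p"
  define V where "V = w \<otimes> P"
  define r where "r = p \<otimes> q"
  have SS: "P \<in> S" "V \<in> S" "r \<in> S" using S P_def V_def r_def by auto
  have Vw: "V \<preceq> w" using V_def SS S by simp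
  have rw: "r \<preceq> w" using r_def S pw le_trans[of r p w] by simp
  have pP: "p \<oplus> P = p" unfolding P_def using S pd by (simp add: ja)
  have 1: "V \<oplus> p = p"
  proof -
    have "V \<oplus> p = p \<oplus> V" using comp[of V p w] Vw pw SS S by simp
    also have "\<dots> = (p \<oplus> w) \<otimes> (p \<oplus> P)" unfolding V_def using LD S SS by simp
    also have "\<dots> = w \<otimes> p" using pP jle2[of p w] pw S by simp
    also have "\<dots> = p" using le_meet_eq2 pw S by simp
    finally show ?thesis .
  qed
  have qpw: "q \<oplus> p \<preceq> w" using jub S pw qw by simp
  have 2: "V \<oplus> q = q \<oplus> p"
  proof -
    have "V \<oplus> q = q \<oplus> V" using comp[of V q w] Vw qw SS S by simp
    also have "\<dots> = (q \<oplus> w) \<otimes> (q \<oplus> P)" unfolding V_def using LD S SS by simp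
    also have "\<dots> = w \<otimes> (q \<oplus> p)" using jle2[of q w] qw S qd P_def by (simp add: ja)
    also have "\<dots> = q \<oplus> p" using le_meet_eq2 qpw S by simp
    finally show ?thesis .
  qed
  have pqp: "p \<preceq> q \<oplus> p" using comp[of p q w] S pw qw ax1 by metis
  have 3: "V \<oplus> r = p"
  proof -
    have "V \<oplus> r = (V \<oplus> p) \<otimes> (V \<oplus> q)" unfolding r_def using LD S SS by simp
    also have "\<dots> = p" using 1 2 pqp le_meet_eq by (simp add: S)
    finally show ?thesis .
  qed
  have 4: "p \<preceq> r \<oplus> P"
  proof -
    have "r \<oplus> V = V \<oplus> r" using comp[of r V w] rw Vw SS S by simp
    hence "p = (r \<oplus> w) \<otimes> (r \<oplus> P)" using 3 LD[of r w P] S SS V_def by simp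
    thus ?thesis using le_m2 S SS by (metis jc)
  qed
  define t where "t = r \<oplus> d"
  have tS: "t \<in> S" using t_def SS S by simp
  have u: "r \<oplus> P = t \<oplus> p" unfolding t_def P_def using S SS by (simp add: ja)
  have tu: "t \<preceq> t \<oplus> p" using ax1 tS S by simp
  have pu: "p \<preceq> t \<oplus> p" using 4 u by simp
  have "t \<oplus> p = p \<oplus> t" using comp[of t p "t \<oplus> p"] tu pu tS S by simp
  also have "\<dots> = p"
  proof -
    have "p \<oplus> r = p" using jle1[of r p] r_def S by simp
    thus ?thesis unfolding t_def using S SS pd by (simp add: ja)
  qed
  finally have "t \<oplus> p = p" .
  thus ?thesis using tu t_def r_def by simp
qed

lemma K4: assumes S: "p \<in> S" "q \<in> S" "w \<in> S" "d \<in> S"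
  and pw: "p \<preceq> w" and qw: "q \<preceq> w" and pd: "p \<oplus> d = p" and qd: "q \<oplus> d = q"
  shows "(p \<otimes> q) \<oplus> d = p \<otimes> q"
proof -
  have 1: "(p \<otimes> q) \<oplus> d \<preceq> p" using K4half assms by blast
  have 2: "(q \<otimes> p) \<oplus> d \<preceq> q" using K4half[of q p w d] assms by blast
  have "(p \<otimes> q) \<oplus> d \<preceq> p \<otimes> q" using 1 2 le_glb S by (simp add: mcomm)
  moreover have "p \<otimes> q \<preceq> (p \<otimes> q) \<oplus> d" using ax1 S by simp
  ultimately show ?thesis using le_anti S by (meson jc mc)
qed

lemma dom_up: "m' \<in> S \<Longrightarrow> x \<in> S \<Longrightarrow> d \<in> S \<Longrightarrow> m' \<preceq> x \<Longrightarrow> m' \<oplus> d = m' \<Longrightarrow> x \<oplus> d = x"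
  by (metis ja jle1)

definition vv (infixl "\<curlyvee>" 65) where "a \<curlyvee> b = (a \<oplus> b) \<otimes> (b \<oplus> a)"

lemma vvS[simp]: "a \<in> S \<Longrightarrow> b \<in> S \<Longrightarrow> a \<curlyvee> b \<in> S" by (simp add: vv_def)
lemma vv_le1: "a \<in> S \<Longrightarrow> b \<in> S \<Longrightarrow> a \<curlyvee> b \<preceq> a \<oplus> b" by (simp add: vv_def)
lemma vv_le2: "a \<in> S \<Longrightarrow> b \<in> S \<Longrightarrow> a \<curlyvee> b \<preceq> b \<oplus> a" by (simp add: vv_def)

lemma vvj: assumes "a \<in> S" "b \<in> S" shows "a \<curlyvee> (a \<curlyvee> b) = a \<oplus> b"
proof -
  define c where "c = a \<curlyvee> b"
  have cS: "c \<in> S" using c_def assms by simp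
  have c1: "c \<preceq> a \<oplus> b" using c_def vv_le1 assms by simp
  have B1: "a \<oplus> c \<preceq> a \<oplus> b" using M1[of a c "a \<oplus> b"] c1 assms cS by (simp add: ja)
  have "b \<otimes> (a \<oplus> b) \<preceq> c" unfolding c_def vv_def using assms
    by (metis ax1 jc le_glb le_m1 le_m2 le_trans mc mcomm)
  hence "a \<oplus> (b \<otimes> (a \<oplus> b)) \<preceq> a \<oplus> c" using M1 assms cS by simp
  hence "a \<oplus> b \<preceq> a \<oplus> c" using jeq_lemma assms by simp
  hence B: "a \<oplus> c = a \<oplus> b" using B1 le_anti assms cS by (meson jc)
  have A1: "c \<oplus> a \<preceq> a \<oplus> b" using jub c1 ax1 assms cS by simp
  have "(a \<oplus> b) \<otimes> a \<preceq> c \<oplus> a" using ax4[of "a \<oplus> b" "b \<oplus> a" a] assms c_def vv_def by simp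
  moreover have "(a \<oplus> b) \<otimes> a = a" using le_meet_eq2[of a "a \<oplus> b"] ax1 assms by simp
  ultimately have "a \<preceq> c \<oplus> a" by simp
  hence "a \<oplus> c \<preceq> c \<oplus> a" using jub ax1 assms cS by simp
  hence A: "c \<oplus> a = a \<oplus> b" using A1 B le_anti assms cS by (metis jc)
  show ?thesis using A B c_def vv_def assms by simp
qed

lemma vj: "a \<in> S \<Longrightarrow> b \<in> S \<Longrightarrow> vee_join (\<curlyvee>) a b = a \<oplus> b"
  unfolding vee_join_def using vvj by simp

lemma vv_LD: assumes "a \<in> S" "b \<in> S" "c \<in> S" shows "a \<oplus> (b \<curlyvee> c) = (a \<oplus> b) \<curlyvee> (a \<oplus> c)"
proof -
  have "a \<oplus> (b \<curlyvee> c) = (a \<oplus> (b \<oplus> c)) \<otimes> (a \<oplus> (c \<oplus> b))" unfolding vv_def using LD assms by simp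
  moreover have "a \<oplus> b \<oplus> (a \<oplus> c) = a \<oplus> (b \<oplus> c)" using assms by (metis ja lrb3 jc)
  moreover have "a \<oplus> c \<oplus> (a \<oplus> b) = a \<oplus> (c \<oplus> b)" using assms by (metis ja lrb3 jc)
  ultimately show ?thesis unfolding vv_def by simp
qed

lemma L8: assumes S: "a \<in> S" "b \<in> S" "c \<in> S" "d \<in> S"
  and h: "a \<oplus> d = a" "b \<oplus> d = b" "c \<oplus> d = c" "(a \<curlyvee> b) \<oplus> d = a \<curlyvee> b" "(b \<curlyvee> c) \<oplus> d = b \<curlyvee> c"
  shows "(a \<curlyvee> c) \<oplus> d = a \<curlyvee> c"
proof -
  have gen: "\<And>x y. x \<in> S \<Longrightarrow> y \<in> S \<Longrightarrow> x \<oplus> d = x \<Longrightarrow> y \<oplus> d = y \<Longrightarrow> (x \<curlyvee> y) \<oplus> d = x \<curlyvee> y \<Longrightarrow>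
     ((x \<otimes> (x \<curlyvee> y)) \<otimes> (y \<otimes> (x \<curlyvee> y))) \<oplus> d = (x \<otimes> (x \<curlyvee> y)) \<otimes> (y \<otimes> (x \<curlyvee> y))
     \<and> (x \<otimes> (x \<curlyvee> y)) \<otimes> (y \<otimes> (x \<curlyvee> y)) \<preceq> x \<and> (x \<otimes> (x \<curlyvee> y)) \<otimes> (y \<otimes> (x \<curlyvee> y)) \<preceq> y"
  proof -
    fix x y assume a: "x \<in> S" "y \<in> S" "x \<oplus> d = x" "y \<oplus> d = y" "(x \<curlyvee> y) \<oplus> d = x \<curlyvee> y"
    have 1: "(x \<otimes> (x \<curlyvee> y)) \<oplus> d = x \<otimes> (x \<curlyvee> y)"
      using K4[of x "x \<curlyvee> y" "x \<oplus> y" d] a S vv_le1 ax1 by simp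
    have 2: "(y \<otimes> (x \<curlyvee> y)) \<oplus> d = y \<otimes> (x \<curlyvee> y)"
      using K4[of y "x \<curlyvee> y" "y \<oplus> x" d] a S vv_le2 ax1 by simp
    have 3: "((x \<otimes> (x \<curlyvee> y)) \<otimes> (y \<otimes> (x \<curlyvee> y))) \<oplus> d = (x \<otimes> (x \<curlyvee> y)) \<otimes> (y \<otimes> (x \<curlyvee> y))"
      using K4[of "x \<otimes> (x \<curlyvee> y)" "y \<otimes> (x \<curlyvee> y)" "x \<curlyvee> y" d] 1 2 a S by simp
    have 4: "(x \<otimes> (x \<curlyvee> y)) \<otimes> (y \<otimes> (x \<curlyvee> y)) \<preceq> x" using a
      by (meson le_m1 le_trans mc vvS)
    have 5: "(x \<otimes> (x \<curlyvee> y)) \<otimes> (y \<otimes> (x \<curlyvee> y)) \<preceq> y" using a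
      by (meson le_m1 le_m2 le_trans mc vvS)
    show "?thesis x y" using 3 4 5 by blast
  qed
  define x1 where "x1 = (a \<otimes> (a \<curlyvee> b)) \<otimes> (b \<otimes> (a \<curlyvee> b))"
  define x2 where "x2 = (b \<otimes> (b \<curlyvee> c)) \<otimes> (c \<otimes> (b \<curlyvee> c))"
  have X: "x1 \<in> S" "x2 \<in> S" using x1_def x2_def S by auto
  have g1: "x1 \<oplus> d = x1" "x1 \<preceq> a" "x1 \<preceq> b" using gen[of a b] S h x1_def by auto
  have g2: "x2 \<oplus> d = x2" "x2 \<preceq> b" "x2 \<preceq> c" using gen[of b c] S h x2_def by auto
  have 6: "(x1 \<otimes> x2) \<oplus> d = x1 \<otimes> x2" using K4[of x1 x2 b d] g1 g2 X S by simp
  have "x1 \<otimes> x2 \<preceq> a" "x1 \<otimes> x2 \<preceq> c" using g1 g2 X S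
    by (meson le_m1 le_m2 le_trans mc)+
  hence "x1 \<otimes> x2 \<preceq> a \<curlyvee> c" unfolding vv_def using S X
    by (meson ax1 jc le_glb le_trans mc)
  thus ?thesis using dom_up[of "x1 \<otimes> x2" "a \<curlyvee> c" d] 6 X S by simp
qed

lemma main: "vee_algebra S (\<lambda>a b. (a \<oplus> b) \<otimes> (b \<oplus> a))"
proof -
  have e: "(\<lambda>a b. (a \<oplus> b) \<otimes> (b \<oplus> a)) = (\<curlyvee>)" by (intro ext) (simp add: vv_def)
  have lrb: "left_regular_band S (vee_join (\<curlyvee>))"
    unfolding left_regular_band_def by (simp add: vj ja lrb3)
  show ?thesis unfolding e vee_algebra_def lrb_le_def
  proof (intro conjI ballI impI lrb)
    fix a b assume "a \<in> S" "b \<in> S"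
    thus "a \<curlyvee> b \<in> S" "a \<curlyvee> b = b \<curlyvee> a" "vee_join (\<curlyvee>) (a \<curlyvee> b) (vee_join (\<curlyvee>) a b) = vee_join (\<curlyvee>) a b"
      by (auto simp: vj vv_def mcomm jle2 vv_le1)
  next
    fix a assume "a \<in> S" thus "a \<curlyvee> a = a" by (simp add: vv_def)
  next
    fix a b c assume "a \<in> S" "b \<in> S" "c \<in> S"
    thus "vee_join (\<curlyvee>) a (b \<curlyvee> c) = vee_join (\<curlyvee>) a b \<curlyvee> vee_join (\<curlyvee>) a c"
      by (simp add: vj vv_LD)
  next
    fix a b c d assume S: "a \<in> S" "b \<in> S" "c \<in> S" "d \<in> S"
      and "vee_join (\<curlyvee>) a d = a \<and> vee_join (\<curlyvee>) b d = b \<and> vee_join (\<curlyvee>) c d = c \<and>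
           vee_join (\<curlyvee>) (a \<curlyvee> b) d = a \<curlyvee> b \<and> vee_join (\<curlyvee>) (b \<curlyvee> c) d = b \<curlyvee> c"
    thus "vee_join (\<curlyvee>) (a \<curlyvee> c) d = a \<curlyvee> c" using L8[of a b c d] by (simp add: vj)
  qed
qed
end

definition ovr :: "('x \<times> 'y) set \<Rightarrow> ('x \<times> 'y) set \<Rightarrow> ('x \<times> 'y) set" where
  "ovr f g = f \<union> rdiff g f"

lemma ru_comm: "runion f g = runion g f"
  unfolding runion_def by blast
lemma ru_idem: "runion f f = f"
  unfolding runion_def rdiff_def by blast
lemma ru_ovr: "single_valued f \<Longrightarrow> single_valued g \<Longrightarrow> runion f (runion f g) = ovr f g"
  unfolding runion_def rdiff_def ovr_def single_valued_def by (auto simp: Domain_iff) blast+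
lemma ovr_assoc: "ovr f (ovr g k) = ovr (ovr f g) k"
  unfolding ovr_def rdiff_def by (auto simp: Domain_iff)
lemma ovr_idem: "ovr f f = f"
  unfolding ovr_def rdiff_def by auto
lemma ovr_lrb: "ovr f g = ovr (ovr f g) f"
  unfolding ovr_def rdiff_def by (auto simp: Domain_iff)
lemma ovr_ru: "single_valued f \<Longrightarrow> single_valued g \<Longrightarrow> ovr (runion f g) (ovr f g) = ovr f g"
  unfolding runion_def rdiff_def ovr_def single_valued_def by (auto simp: Domain_iff; metis)
lemma ovr_dist: "single_valued f \<Longrightarrow> single_valued g \<Longrightarrow> single_valued k \<Longrightarrow>
   ovr f (runion g k) = runion (ovr f g) (ovr f k)"
  unfolding runion_def rdiff_def ovr_def single_valued_def by (auto simp: Domain_iff)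
lemma ovr_le: "ovr a d = a \<longleftrightarrow> Domain d \<subseteq> Domain a"
  unfolding ovr_def rdiff_def by (auto simp: Domain_iff)
lemma dom_cond: "single_valued b \<Longrightarrow>
  Domain d \<subseteq> Domain a \<Longrightarrow> Domain d \<subseteq> Domain b \<Longrightarrow> Domain d \<subseteq> Domain c \<Longrightarrow>
  Domain d \<subseteq> Domain (runion a b) \<Longrightarrow> Domain d \<subseteq> Domain (runion b c) \<Longrightarrow> Domain d \<subseteq> Domain (runion a c)"
  unfolding runion_def rdiff_def single_valued_def by (auto simp: Domain_iff subset_iff) blast


lemma func_vee: assumes F: "functional_vee_algebra S v X Y A h" shows "vee_algebra S v"
proof -
  have cl: "\<And>a b. a \<in> S \<Longrightarrow> b \<in> S \<Longrightarrow> v a b \<in> S" using F unfolding functional_vee_algebra_def by blast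
  have AP: "A \<subseteq> Par X Y" and bij: "bij_betw h S A"
    and hv: "\<And>a b. a \<in> S \<Longrightarrow> b \<in> S \<Longrightarrow> h (v a b) = runion (h a) (h b)"
    using F unfolding functional_vee_algebra_def by blast+
  have inj: "inj_on h S" using bij bij_betw_def by blast
  have hA: "\<And>a. a \<in> S \<Longrightarrow> h a \<in> A" using bij bij_betwE by blast
  have sv: "\<And>a. a \<in> S \<Longrightarrow> single_valued (h a)" using hA AP unfolding Par_def by blast
  have eq: "\<And>a b. a \<in> S \<Longrightarrow> b \<in> S \<Longrightarrow> a = b \<longleftrightarrow> h a = h b" using inj by (meson inj_on_eq_iff)
  have jS: "\<And>a b. a \<in> S \<Longrightarrow> b \<in> S \<Longrightarrow> vee_join v a b \<in> S" unfolding vee_join_def using cl by blast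
  have hj: "\<And>a b. a \<in> S \<Longrightarrow> b \<in> S \<Longrightarrow> h (vee_join v a b) = ovr (h a) (h b)"
    unfolding vee_join_def using hv cl sv by (simp add: ru_ovr)
  have le: "\<And>a d. a \<in> S \<Longrightarrow> d \<in> S \<Longrightarrow> lrb_le (vee_join v) d a \<longleftrightarrow> Domain (h d) \<subseteq> Domain (h a)"
    unfolding lrb_le_def using eq jS hj ovr_le by metis
  have lrb: "left_regular_band S (vee_join v)"
    unfolding left_regular_band_def
  proof (intro conjI ballI)
    fix a b c assume S: "a \<in> S" "b \<in> S" "c \<in> S"
    show "vee_join v a b \<in> S" using jS S by blast
    show "vee_join v a (vee_join v b c) = vee_join v (vee_join v a b) c"
      using S eq jS hj ovr_assoc by simp
  next
    fix a assume S: "a \<in> S"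
    show "vee_join v a a = a" using S eq jS hj ovr_idem by simp
  next
    fix a b assume S: "a \<in> S" "b \<in> S"
    show "vee_join v a b = vee_join v (vee_join v a b) a" using S eq jS hj ovr_lrb[of "h a" "h b"] by simp
  qed
  show ?thesis unfolding vee_algebra_def
  proof (intro conjI ballI impI lrb)
    fix a b assume S: "a \<in> S" "b \<in> S"
    show "v a b \<in> S" using cl S by blast
    show "v a b = v b a" using S eq cl hv ru_comm by metis
    show "vee_join v (v a b) (vee_join v a b) = vee_join v a b"
      using S eq cl jS hj hv sv by (simp add: ovr_ru)
  next
    fix a assume S: "a \<in> S"
    show "v a a = a" using S eq cl hv ru_idem by metis
  next
    fix a b c assume S: "a \<in> S" "b \<in> S" "c \<in> S"
    show "vee_join v a (v b c) = v (vee_join v a b) (vee_join v a c)"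
      using S eq cl jS hj hv sv by (simp add: ovr_dist)
  next
    fix a b c d assume S: "a \<in> S" "b \<in> S" "c \<in> S" "d \<in> S"
      and H: "lrb_le (vee_join v) d a \<and> lrb_le (vee_join v) d b \<and> lrb_le (vee_join v) d c \<and>
        lrb_le (vee_join v) d (v a b) \<and> lrb_le (vee_join v) d (v b c)"
    have "Domain (h d) \<subseteq> Domain (runion (h a) (h c))"
      using dom_cond[of "h b" "h d" "h a" "h c"] H le S cl hv sv by simp
    thus "lrb_le (vee_join v) d (v a c)" using le S cl hv by simp
  qed
qed

theorem corollary3p10:
  shows "(\<forall>(S :: 'a set) meet join. ado_semilattice S meet join \<longrightarrow>
            vee_algebra S (\<lambda>a b. meet (join a b) (join b a)))
       \<and> (\<forall>(S :: 'b set) v (X :: 'x set) (Y :: 'y set) A h.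
            functional_vee_algebra S v X Y A h \<longrightarrow> vee_algebra S v)"
proof (intro conjI allI impI)
  fix S :: "'a set" and meet join
  assume "ado_semilattice S meet join"
  then interpret ado S meet join by unfold_locales
  show "vee_algebra S (\<lambda>a b. meet (join a b) (join b a))" using main .
next
  fix S :: "'b set" and v and X :: "'x set" and Y :: "'y set" and A h
  assume "functional_vee_algebra S v X Y A h"
  thus "vee_algebra S v" by (rule func_vee)
qed

end
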